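(* Let $P_i$ denote the Legendre polynomials and $L_i=\sqrt{\tfrac{2}{2i+1}}\,P_i$. There does not exist a family $\{\Delta_n\}_{n=0}^{\infty}$ of functions on $(-1,1)$ such that each $\Delta_n$ is continuous on $(-1,1)$, each $\Delta_n$ is equal at every point of $(-1,1)$ to the sum of its Fourier–Legendre series $\sum_{i=0}^{\infty}\alpha_i^n L_i(x)$ with $\alpha_i^n=\int_{-1}^{1}\Delta_n(x)L_i(x)\,dx$, and \[ \int_{-1}^{1} x^{k}\,\Delta_n(x)\,dx=\delta_{k,n}\qquad\text{for all }k,n\in\mathbb{N}_0 . \]
   Context: $\delta_{k,n}$ is the Kronecker delta. The functions $\Delta_n$ in the claim are called "delta functions" for the raw-moment functionals $f\mapsto\int_{-1}^{1}x^k f(x)\,dx$. *)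

theory Defs
  imports "HOL-Analysis.Analysis"
begin

fun legendreP :: "nat \<Rightarrow> real \<Rightarrow> real" where
  "legendreP 0 x = 1"
| "legendreP (Suc 0) x = x"
| "legendreP (Suc (Suc n)) x =
     ((2 * real n + 3) * x * legendreP (Suc n) x - (real n + 1) * legendreP n x) / (real n + 2)"

definition legendreL :: "nat \<Rightarrow> real \<Rightarrow> real" where
  "legendreL i x = sqrt (2 / (2 * real i + 1)) * legendreP i x"

end

theory Submission
  imports Defs "HOL-Computational_Algebra.Polynomial"
begin

fun pL :: "nat \<Rightarrow> real poly" where
  "pL 0 = 1"
| "pL (Suc 0) = [:0, 1:]"
| "pL (Suc (Suc n)) = smult (1 / (real n + 2))
     (smult (2 * real n + 3) (pCons 0 (pL (Suc n))) - smult (real n + 1) (pL n))"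

lemma poly_pL: "poly (pL i) x = legendreP i x"
  by (induction i rule: pL.induct) (auto simp: field_simps)

lemma coeff0: "coeff (pL (Suc (Suc n))) 0 = - (real n + 1) * coeff (pL n) 0 / (real n + 2)"
  by (simp add: field_simps)

lemma coeffS: "coeff (pL (Suc (Suc n))) (Suc k) =
   ((2 * real n + 3) * coeff (pL (Suc n)) k - (real n + 1) * coeff (pL n) (Suc k)) / (real n + 2)"
  by (simp add: field_simps)

definition A :: "nat \<Rightarrow> real" where "A m = coeff (pL (2*m)) 0"

lemma A_Suc: "A (Suc m) = - (2 * real m + 1) / (2 * real m + 2) * A m"
proof -
  have "A (Suc m) = coeff (pL (Suc (Suc (2*m)))) 0" by (simp add: A_def)
  also have "\<dots> = - (2 * real m + 1) / (2 * real m + 2) * A m"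
    unfolding coeff0 A_def by (simp add: field_simps)
  finally show ?thesis .
qed

lemma A_bound: "\<bar>A m\<bar> \<ge> 1 / (2 * real m + 2)"
proof (induction m)
  case 0 then show ?case by (simp add: A_def)
next
  case (Suc m)
  have "\<bar>A (Suc m)\<bar> = (2 * real m + 1) / (2 * real m + 2) * \<bar>A m\<bar>"
    by (simp add: A_Suc abs_mult)
  also have "\<dots> \<ge> (2 * real m + 1) / (2 * real m + 2) * (1 / (2 * real m + 2))"
    using Suc by (intro mult_left_mono) auto
  finally have "\<bar>A (Suc m)\<bar> \<ge> (2 * real m + 1) / (2 * real m + 2)^2"
    by (simp add: power2_eq_square)
  moreover have "(2 * real m + 1) / (2 * real m + 2)^2 \<ge> 1 / (2 * real (Suc m) + 2)"
    by (simp add: divide_simps power2_eq_square) (simp add: algebra_simps)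
  ultimately show ?case by linarith
qed

lemma D: "coeff (pL (2*m+1)) 1 = (2 * real m + 1) * A m"
proof (induction m)
  case 0 then show ?case by (simp add: A_def)
next
  case (Suc m)
  have "coeff (pL (2*Suc m+1)) 1 = coeff (pL (Suc (Suc (2*m+1)))) (Suc 0)" by simp
  also have "\<dots> = ((4 * real m + 5) * A (Suc m) - (2*real m + 2) * ((2 * real m + 1) * A m)) / (2*real m + 3)"
    unfolding coeffS using Suc by (simp add: A_def algebra_simps)
  also have "\<dots> = (2 * real (Suc m) + 1) * A (Suc m)"
  proof -
    have h: "2 * real m + 2 \<noteq> 0" "2 * real m + 3 \<noteq> 0" by linarith+
    show ?thesis unfolding A_Suc by (simp add: divide_simps) (simp add: algebra_simps)
  qed
  finally show ?case .
qed


lemma B: "coeff (pL (2*m)) 2 = - (real m * (2 * real m + 1)) * A m"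
proof (induction m)
  case 0 then show ?case by (simp add: A_def)
next
  case (Suc m)
  have e1: "Suc (2*m) = 2*m+1" by simp
  have e2: "Suc (2*m+1) = 2 * Suc m" by simp
  have e3: "Suc 1 = (2::nat)" by simp
  note h = coeffS[of "2*m" 1, unfolded e1 e2 e3]
  have "coeff (pL (2*Suc m)) 2 = ((4 * real m + 3) * ((2 * real m + 1) * A m) - (2*real m + 1) * (- (real m * (2 * real m + 1)) * A m)) / (2*real m + 2)"
    unfolding h D Suc.IH by (simp add: algebra_simps)
  also have "\<dots> = - (real (Suc m) * (2 * real (Suc m) + 1)) * A (Suc m)"
    unfolding A_Suc by (simp add: divide_simps) (simp add: algebra_simps)
  finally show ?case .
qed

lemma E: "coeff (pL (2*m+1)) 3 = (2 - (2 * real m + 1) * (2 * real m + 2)) / 6 * ((2 * real m + 1) * A m)"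
proof (induction m)
  case 0 then show ?case by (simp add: A_def numeral_3_eq_3)
next
  case (Suc m)
  have e1: "Suc (2*m+1) = 2 * Suc m" by simp
  have e2: "Suc (2 * Suc m) = 2 * Suc m + 1" by simp
  have e3: "Suc 2 = (3::nat)" by simp
  note h = coeffS[of "2*m+1" 2, unfolded e1 e2 e3]
  have "coeff (pL (2*Suc m+1)) 3 = ((4 * real m + 5) * (- (real (Suc m) * (2 * real (Suc m) + 1)) * A (Suc m))
        - (2*real m + 2) * ((2 - (2 * real m + 1) * (2 * real m + 2)) / 6 * ((2 * real m + 1) * A m))) / (2*real m + 3)"
    unfolding h B Suc.IH by (simp add: algebra_simps)
  also have "\<dots> = (2 - (2 * real (Suc m) + 1) * (2 * real (Suc m) + 2)) / 6 * ((2 * real (Suc m) + 1) * A (Suc m))"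
    unfolding A_Suc by (simp add: divide_simps) (simp add: algebra_simps)
  finally show ?case .
qed

lemma C: "coeff (pL (2*m)) 4 = (6 - 2 * real m * (2 * real m + 1)) / 12 * (- (real m * (2 * real m + 1)) * A m)"
proof (induction m)
  case 0 then show ?case by (simp add: A_def)
next
  case (Suc m)
  have e1: "Suc (2*m) = 2*m+1" by simp
  have e2: "Suc (2*m+1) = 2 * Suc m" by simp
  have e3: "Suc 3 = (4::nat)" by simp
  note h = coeffS[of "2*m" 3, unfolded e1 e2 e3]
  have "coeff (pL (2*Suc m)) 4 = ((4 * real m + 3) * ((2 - (2 * real m + 1) * (2 * real m + 2)) / 6 * ((2 * real m + 1) * A m))
        - (2*real m + 1) * ((6 - 2 * real m * (2 * real m + 1)) / 12 * (- (real m * (2 * real m + 1)) * A m))) / (2*real m + 2)"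
    unfolding h E Suc.IH by (simp add: algebra_simps)
  also have "\<dots> = (6 - 2 * real (Suc m) * (2 * real (Suc m) + 1)) / 12 * (- (real (Suc m) * (2 * real (Suc m) + 1)) * A (Suc m))"
    unfolding A_Suc by (simp add: divide_simps) (simp add: algebra_simps)
  finally show ?case .
qed


lemma legendreL_poly: "legendreL i t = sqrt (2 / (2 * real i + 1)) * (\<Sum>k\<le>degree (pL i). coeff (pL i) k * t ^ k)"
  unfolding legendreL_def poly_pL[symmetric] poly_altdef by simp

lemma big_ineq:
  fixes m :: real and a :: real
  assumes m: "m \<ge> 40" and a: "\<bar>a\<bar> \<ge> 1 / (2 * m + 2)"
  shows "2 / (4 * m + 1) * ((6 - 2 * m * (2 * m + 1)) / 12 * (- (m * (2 * m + 1)) * a)) * a \<ge> 1"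
proof -
  have p: "2 * m + 2 > 0" using m by simp
  have "a * a \<ge> (1 / (2 * m + 2)) * (1 / (2 * m + 2))"
    using a p by (metis abs_ge_zero abs_mult_self_eq mult_mono less_eq_real_def divide_pos_pos zero_less_one)
  hence "(1 / (2 * m + 2)) * (1 / (2 * m + 2)) * ((2 * m + 2) * (2 * m + 2)) \<le> a * a * ((2 * m + 2) * (2 * m + 2))"
    by (intro mult_right_mono) auto
  hence aa: "a * a * (2 * m + 2) * (2 * m + 2) \<ge> 1" using p by (simp add: mult.assoc)
  have e: "2 / (4 * m + 1) * ((6 - 2 * m * (2 * m + 1)) / 12 * (- (m * (2 * m + 1)) * a)) * a
      = (2 * (2 * m * (2 * m + 1) - 6) * (m * (2 * m + 1))) / (12 * (4 * m + 1)) * (a * a)"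
    using m by (simp add: field_simps)
  have q1: "2 * m * (2 * m + 1) - 6 \<ge> 4 * m * m" using m by (simp add: algebra_simps)
  have q2: "m * (2 * m + 1) \<ge> 2 * m * m" using m by (simp add: algebra_simps)
  have "2 * (2 * m * (2 * m + 1) - 6) * (m * (2 * m + 1)) \<ge> 2 * (4 * m * m) * (2 * m * m)"
  proof (rule mult_mono)
    have "0 \<le> 4 * m * m" using m by simp
    then show "0 \<le> 2 * (2 * m * (2 * m + 1) - 6)" using q1 by (smt (verit))
    show "0 \<le> 2 * m * m" using m by simp
  qed (use q1 q2 in auto)
  moreover have "2 * (4 * m * m) * (2 * m * m) = 16 * m * (m * m * m)" by (simp add: algebra_simps)
  moreover have "16 * m * (m * m * m) \<ge> 640 * (m * m * m)" using m by (intro mult_right_mono) auto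
  moreover have "12 * (4 * m + 1) * (2 * m + 2) * (2 * m + 2) \<le> 12 * (5 * m) * (3 * m) * (3 * m)"
    using m by (intro mult_mono) auto
  moreover have "12 * (5 * m) * (3 * m) * (3 * m) = 540 * (m * m * m)" by (simp add: algebra_simps)
  ultimately have r: "2 * (2 * m * (2 * m + 1) - 6) * (m * (2 * m + 1)) \<ge> 12 * (4 * m + 1) * (2 * m + 2) * (2 * m + 2)"
    using m by (smt (verit) mult_pos_pos)
  have d: "12 * (4 * m + 1) > 0" using m by simp
  have "(2 * (2 * m * (2 * m + 1) - 6) * (m * (2 * m + 1))) / (12 * (4 * m + 1)) \<ge> (2 * m + 2) * (2 * m + 2)"
    using r d by (simp add: le_divide_eq mult_ac)
  hence "(2 * (2 * m * (2 * m + 1) - 6) * (m * (2 * m + 1))) / (12 * (4 * m + 1)) * (a * a) \<ge> (2 * m + 2) * (2 * m + 2) * (a * a)"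
    by (intro mult_right_mono) auto
  with aa show ?thesis unfolding e by (simp add: algebra_simps)
qed


theorem proposition1:
  shows "\<not> (\<exists>\<Delta> :: nat \<Rightarrow> real \<Rightarrow> real.
            (\<forall>n. continuous_on {-1<..<1} (\<Delta> n))
          \<and> (\<forall>n. \<forall>x\<in>{-1<..<1}.
                (\<lambda>i. integral {-1<..<1} (\<lambda>t. \<Delta> n t * legendreL i t) * legendreL i x)
                  sums \<Delta> n x)
          \<and> (\<forall>k n. ((\<lambda>x. x ^ k * \<Delta> n x) has_integral (if k = n then 1 else 0)) {-1<..<1}))"
proof
  assume "\<exists>\<Delta> :: nat \<Rightarrow> real \<Rightarrow> real.
            (\<forall>n. continuous_on {-1<..<1} (\<Delta> n))
          \<and> (\<forall>n. \<forall>x\<in>{-1<..<1}.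
                (\<lambda>i. integral {-1<..<1} (\<lambda>t. \<Delta> n t * legendreL i t) * legendreL i x)
                  sums \<Delta> n x)
          \<and> (\<forall>k n. ((\<lambda>x. x ^ k * \<Delta> n x) has_integral (if k = n then 1 else 0)) {-1<..<1})"
  then obtain \<Delta> :: "nat \<Rightarrow> real \<Rightarrow> real" where
    H2: "\<forall>n. \<forall>x\<in>{-1<..<1}.
                (\<lambda>i. integral {-1<..<1} (\<lambda>t. \<Delta> n t * legendreL i t) * legendreL i x)
                  sums \<Delta> n x"
    and H3: "\<forall>k n. ((\<lambda>x. x ^ k * \<Delta> n x) has_integral (if k = n then 1 else 0)) {-1<..<1}"
    by blast
  define s where "s i = sqrt (2 / (2 * real i + 1))" for i :: nat
  have int: "integral {-1<..<1} (\<lambda>t. \<Delta> 4 t * legendreL i t) = s i * coeff (pL i) 4" for i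
  proof -
    let ?d = "degree (pL i)"
    have "((\<lambda>t. \<Sum>k\<le>?d. (s i * coeff (pL i) k) * (t ^ k * \<Delta> 4 t)) has_integral
            (\<Sum>k\<le>?d. (s i * coeff (pL i) k) * (if k = 4 then 1 else 0))) {-1<..<1}"
      using H3 by (intro has_integral_sum has_integral_mult_right) auto
    moreover have "(\<lambda>t. \<Sum>k\<le>?d. (s i * coeff (pL i) k) * (t ^ k * \<Delta> 4 t)) = (\<lambda>t. \<Delta> 4 t * legendreL i t)"
      by (rule ext) (simp add: legendreL_poly s_def sum_distrib_left mult_ac)
    moreover have "(\<Sum>k\<le>?d. (s i * coeff (pL i) k) * (if k = 4 then 1 else 0)) = s i * coeff (pL i) 4"
    proof (cases "4 \<le> ?d")
      case True then show ?thesis by (simp add: if_distrib[of "\<lambda>x. _ * x"] sum.delta cong: if_cong)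
    next
      case False then show ?thesis by (simp add: coeff_eq_0)
    qed
    ultimately show ?thesis by (metis integral_unique)
  qed
  have L0: "legendreL i 0 = s i * coeff (pL i) 0" for i
    by (simp add: legendreL_def s_def poly_pL[symmetric] poly_0_coeff_0)
  have "(\<lambda>i. integral {-1<..<1} (\<lambda>t. \<Delta> 4 t * legendreL i t) * legendreL i 0) sums \<Delta> 4 0"
    using bspec[OF spec[OF H2, of 4], of 0] by simp
  hence "(\<lambda>i. (s i * s i) * (coeff (pL i) 4 * coeff (pL i) 0)) \<longlonglongrightarrow> 0"
    unfolding int L0 by (auto dest!: sums_summable summable_LIMSEQ_zero simp: mult_ac)
  from LIMSEQ_D[OF this zero_less_one] obtain N where
    N: "\<forall>i\<ge>N. norm ((s i * s i) * (coeff (pL i) 4 * coeff (pL i) 0) - 0) < 1"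
    by blast
  define m where "m = N + 40"
  have "norm ((s (2*m) * s (2*m)) * (coeff (pL (2*m)) 4 * coeff (pL (2*m)) 0)) < 1"
    using N unfolding m_def by simp
  moreover have "s (2*m) * s (2*m) = 2 / (4 * real m + 1)"
    by (simp add: s_def)
  moreover have "2 / (4 * real m + 1) * (coeff (pL (2*m)) 4 * coeff (pL (2*m)) 0) \<ge> 1"
  proof -
    have m40: "real m \<ge> 40" by (simp add: m_def)
    show ?thesis using big_ineq[OF m40 A_bound[of m]] unfolding C A_def[symmetric]
      by (simp only: mult.assoc)
  qed
  ultimately show False by simp
qed

end
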